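(* In the full-information online setting for length-$\ell$ menus of lotteries over $m$ items, when every buyer is one of $V$ known types (arriving in an arbitrary order), there is an algorithm with regret $O\big(m^2H\ell\sqrt T\ln(V\ell)\big)$.
   Context: A length-$\ell$ menu of lotteries over $m$ items consists of entries $(\vec\phi^{(j)},p^{(j)})$, $j=1,\dots,\ell$, with $\vec\phi^{(j)}\in[0,1]^m$, $p^{(j)}\in[0,mH]$, plus the null entry $(\vec0,0)$. A buyer with item values $v(\vec e_i)\in[0,H]$ (additive or unit-demand) selects an entry maximizing $\sum_i v(\vec e_i)\phi^{(j)}[i]-p^{(j)}$ and pays its price (the revenue). In full information the learner observes the revenue of every menu after each round. Regret is $\mathbb E[\max_{\vec\rho}\sum_t u_t(\vec\rho)-\sum_t u_t(\vec\rho_t)]$ over all length-$\ell$ menus. *)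

theory Defs
  imports "HOL-Probability.Probability"
begin

text \<open>A length-l menu over m items: entries j = 1..l, each a pair (lottery, price).
  Lottery: item index i < m maps to allocation probability. Index 0 is the null entry.\<close>
type_synonym menu = "nat \<Rightarrow> (nat \<Rightarrow> real) \<times> real"

definition valid_menu :: "nat \<Rightarrow> real \<Rightarrow> nat \<Rightarrow> menu \<Rightarrow> bool" where
  "valid_menu m H l \<rho> \<longleftrightarrow>
     (\<forall>j\<in>{1..l}. (\<forall>i<m. 0 \<le> fst (\<rho> j) i \<and> fst (\<rho> j) i \<le> 1)
                  \<and> 0 \<le> snd (\<rho> j) \<and> snd (\<rho> j) \<le> real m * H)"

definition entry :: "menu \<Rightarrow> nat \<Rightarrow> (nat \<Rightarrow> real) \<times> real" where
  "entry \<rho> j = (if j = 0 then ((\<lambda>_. 0), 0) else \<rho> j)"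

text \<open>Buyer utility for entry j; v i is the value v(e_i) of item i.
  (Same formula for additive and unit-demand buyers.)\<close>
definition buyer_util :: "nat \<Rightarrow> (nat \<Rightarrow> real) \<Rightarrow> menu \<Rightarrow> nat \<Rightarrow> real" where
  "buyer_util m v \<rho> j = (\<Sum>i<m. v i * fst (entry \<rho> j) i) - snd (entry \<rho> j)"

definition revenue :: "nat \<Rightarrow> nat \<Rightarrow> (nat \<Rightarrow> real) \<Rightarrow> menu \<Rightarrow> real" where
  "revenue m l v \<rho> = Max {snd (entry \<rho> j) | j. j \<le> l \<and>
       (\<forall>k\<le>l. buyer_util m v \<rho> k \<le> buyer_util m v \<rho> j)}"

text \<open>Full-information online learner: maps the observed history of revenue
  functions (one per past round) to a distribution over menus for the next round.\<close>
type_synonym learner = "(menu \<Rightarrow> real) list \<Rightarrow> menu pmf"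

definition learner_reward :: "learner \<Rightarrow> (nat \<Rightarrow> menu \<Rightarrow> real) \<Rightarrow> nat \<Rightarrow> real" where
  "learner_reward A u T =
     (\<Sum>t<T. measure_pmf.expectation (A (map u [0..<t])) (u t))"

definition menu_regret :: "nat \<Rightarrow> real \<Rightarrow> nat \<Rightarrow> learner \<Rightarrow> (nat \<Rightarrow> nat \<Rightarrow> real) \<Rightarrow> nat \<Rightarrow> real" where
  "menu_regret m H l A b T =
     (SUP \<rho>\<in>{\<rho>. valid_menu m H l \<rho>}. \<Sum>t<T. revenue m l (b t) \<rho>)
     - learner_reward A (\<lambda>t. revenue m l (b t)) T"

end

theory Submission
  imports Defs "HOL-Library.Function_Algebras"
begin


definition hw :: "real \<Rightarrow> (menu \<Rightarrow> real) list \<Rightarrow> menu \<Rightarrow> real" where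
  "hw \<eta> h x = exp (\<eta> * sum_list (map (\<lambda>f. f x) h))"

definition hedge :: "real \<Rightarrow> menu set \<Rightarrow> learner" where
  "hedge \<eta> E h = embed_pmf (\<lambda>x. if x \<in> E then hw \<eta> h x / (\<Sum>y\<in>E. hw \<eta> h y) else 0)"

lemma hedge_pmf:
  assumes "finite E" "E \<noteq> {}"
  shows "pmf (hedge \<eta> E h) x = (if x \<in> E then hw \<eta> h x / (\<Sum>y\<in>E. hw \<eta> h y) else 0)"
proof -
  let ?f = "(\<lambda>x. if x \<in> E then hw \<eta> h x / (\<Sum>y\<in>E. hw \<eta> h y) else 0)"
  have pos: "(\<Sum>y\<in>E. hw \<eta> h y) > 0"
    using assms by (intro sum_pos) (auto simp: hw_def)
  have nn: "\<And>x. 0 \<le> ?f x" using pos by (auto simp: hw_def intro!: divide_nonneg_pos)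
  have "(\<integral>\<^sup>+x. ennreal (?f x) \<partial>count_space UNIV) = (\<Sum>x\<in>E. ennreal (?f x))"
    by (rule nn_integral_count_space') (use assms in auto)
  also have "\<dots> = ennreal (\<Sum>x\<in>E. ?f x)"
    by (intro sum_ennreal) (use pos in \<open>auto simp: hw_def intro!: divide_nonneg_pos\<close>)
  also have "(\<Sum>x\<in>E. ?f x) = (\<Sum>x\<in>E. hw \<eta> h x / (\<Sum>y\<in>E. hw \<eta> h y))" by simp
  also have "\<dots> = 1" using pos by (simp add: sum_divide_distrib[symmetric])
  finally have "(\<integral>\<^sup>+x. ennreal (?f x) \<partial>count_space UNIV) = 1" by simp
  then show ?thesis unfolding hedge_def using nn by (subst pmf_embed_pmf) auto
qed

lemma hedge_set:
  assumes "finite E" "E \<noteq> {}"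
  shows "set_pmf (hedge \<eta> E h) \<subseteq> E"
  using hedge_pmf[OF assms] by (auto simp: set_pmf_eq)

lemma hedge_expect:
  assumes "finite E" "E \<noteq> {}"
  shows "measure_pmf.expectation (hedge \<eta> E h) g
     = (\<Sum>x\<in>E. hw \<eta> h x * g x) / (\<Sum>y\<in>E. hw \<eta> h y)"
proof -
  have "measure_pmf.expectation (hedge \<eta> E h) g = (\<Sum>x\<in>E. pmf (hedge \<eta> E h) x *\<^sub>R g x)"
    by (rule integral_measure_pmf[OF assms(1)]) (use hedge_set[OF assms] in auto)
  also have "\<dots> = (\<Sum>x\<in>E. hw \<eta> h x * g x / (\<Sum>y\<in>E. hw \<eta> h y))"
    by (rule sum.cong) (auto simp: hedge_pmf[OF assms])
  finally show ?thesis by (simp add: sum_divide_distrib)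
qed

lemma sum_list_hist: "sum_list (map (\<lambda>f. f x) (map u [0..<t])) = (\<Sum>s<t. u s x)"
  by (induct t) auto

lemma sum_list_hist': "sum_list (map ((\<lambda>f. f x) \<circ> u) [0..<t]) = (\<Sum>s<t. u s x)"
  using sum_list_hist[of x u t] by simp

lemma hedge_regret:
  fixes E :: "menu set" and u :: "nat \<Rightarrow> menu \<Rightarrow> real"
  assumes E: "finite E" "E \<noteq> {}"
    and u: "\<And>t x. t < T \<Longrightarrow> x \<in> E \<Longrightarrow> 0 \<le> u t x \<and> u t x \<le> B"
    and eta: "\<eta> > 0" "\<eta> * B \<le> 1"
    and x: "x \<in> E"
  shows "(\<Sum>t<T. u t x) \<le> learner_reward (hedge \<eta> E) u T + ln (card E) / \<eta> + \<eta> * B^2 * T"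
proof -
  define W where "W t = (\<Sum>y\<in>E. hw \<eta> (map u [0..<t]) y)" for t
  define e where "e t = measure_pmf.expectation (hedge \<eta> E (map u [0..<t])) (u t)" for t
  have hwS: "hw \<eta> (map u [0..<t]) y = exp (\<eta> * (\<Sum>s<t. u s y))" for t y
    by (simp add: hw_def sum_list_hist')
  have Wpos: "W t > 0" for t
    unfolding W_def using E by (intro sum_pos) (auto simp: hw_def)
  have step: "W (Suc t) \<le> W t * exp (\<eta> * e t + \<eta>^2 * B^2)" if t: "t < T" for t
  proof -
    have "W (Suc t) = (\<Sum>y\<in>E. hw \<eta> (map u [0..<t]) y * exp (\<eta> * u t y))"
      unfolding W_def hwS by (auto intro!: sum.cong simp: exp_add[symmetric] algebra_simps)
    also have "\<dots> \<le> (\<Sum>y\<in>E. hw \<eta> (map u [0..<t]) y * (1 + \<eta> * u t y + \<eta>^2 * B^2))"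
    proof (rule sum_mono)
      fix y assume y: "y \<in> E"
      have a: "0 \<le> \<eta> * u t y" using u[OF t y] eta by simp
      have b: "\<eta> * u t y \<le> 1"
        using u[OF t y] eta by (meson dual_order.trans less_le mult_left_mono)
      have "exp (\<eta> * u t y) \<le> 1 + \<eta> * u t y + (\<eta> * u t y)^2" by (rule exp_bound[OF a b])
      also have "(\<eta> * u t y)^2 \<le> \<eta>^2 * B^2"
        using u[OF t y] eta by (simp add: power_mult_distrib power_mono)
      finally show "hw \<eta> (map u [0..<t]) y * exp (\<eta> * u t y)
          \<le> hw \<eta> (map u [0..<t]) y * (1 + \<eta> * u t y + \<eta>^2 * B^2)"
        by (simp add: hw_def)
    qed
    also have "\<dots> = W t * (1 + \<eta>^2 * B^2) + \<eta> * (\<Sum>y\<in>E. hw \<eta> (map u [0..<t]) y * u t y)"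
      unfolding W_def by (simp add: algebra_simps sum.distrib sum_distrib_left sum_distrib_right)
    also have "(\<Sum>y\<in>E. hw \<eta> (map u [0..<t]) y * u t y) = W t * e t"
      unfolding e_def hedge_expect[OF E] W_def using Wpos[of t] unfolding W_def by simp
    also have "W t * (1 + \<eta>^2 * B^2) + \<eta> * (W t * e t) = W t * (1 + (\<eta> * e t + \<eta>^2 * B^2))"
      by (simp add: algebra_simps)
    also have "\<dots> \<le> W t * exp (\<eta> * e t + \<eta>^2 * B^2)"
      using Wpos[of t] by (intro mult_left_mono exp_ge_add_one_self) auto
    finally show ?thesis .
  qed
  have Wbound: "t \<le> T \<Longrightarrow> W t \<le> card E * exp (\<eta> * (\<Sum>s<t. e s) + t * (\<eta>^2 * B^2))" for t
  proof (induct t)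
    case 0 then show ?case by (simp add: W_def hw_def)
  next
    case (Suc t)
    have "W (Suc t) \<le> W t * exp (\<eta> * e t + \<eta>^2 * B^2)" using step Suc by simp
    also have "\<dots> \<le> card E * exp (\<eta> * (\<Sum>s<t. e s) + t * (\<eta>^2 * B^2)) * exp (\<eta> * e t + \<eta>^2 * B^2)"
      using Suc by (intro mult_right_mono) auto
    also have "\<dots> = card E * exp (\<eta> * (\<Sum>s<Suc t. e s) + Suc t * (\<eta>^2 * B^2))"
      by (simp add: exp_add[symmetric] algebra_simps)
    finally show ?case .
  qed
  have "exp (\<eta> * (\<Sum>s<T. u s x)) \<le> W T"
    unfolding W_def hwS[symmetric]
    by (rule member_le_sum) (use x E in \<open>auto simp: hw_def\<close>)
  also have "\<dots> \<le> card E * exp (\<eta> * (\<Sum>s<T. e s) + T * (\<eta>^2 * B^2))" by (rule Wbound) simp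
  finally have "\<eta> * (\<Sum>s<T. u s x) \<le> ln (card E) + (\<eta> * (\<Sum>s<T. e s) + T * (\<eta>^2 * B^2))"
    using E by (subst (asm) ln_le_cancel_iff[symmetric]) (auto simp: ln_mult card_gt_0_iff)
  then have "(\<Sum>s<T. u s x) \<le> ln (card E) / \<eta> + (\<Sum>s<T. e s) + \<eta> * B^2 * T"
    using eta by (simp add: field_simps power2_eq_square)
  moreover have "(\<Sum>s<T. e s) = learner_reward (hedge \<eta> E) u T"
    by (simp add: learner_reward_def e_def)
  ultimately show ?thesis by simp
qed




lemma rev_set_finite:
  "finite {snd (entry \<rho> j) | j. j \<le> l \<and> (\<forall>k\<le>l. buyer_util m v \<rho> k \<le> buyer_util m v \<rho> j)}"
proof -
  have "{snd (entry \<rho> j) | j. j \<le> l \<and> (\<forall>k\<le>l. buyer_util m v \<rho> k \<le> buyer_util m v \<rho> j)}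
      \<subseteq> (\<lambda>j. snd (entry \<rho> j)) ` {..l}" by auto
  then show ?thesis by (rule finite_subset) auto
qed

lemma rev_ge:
  assumes "j \<le> l" "\<forall>k\<le>l. buyer_util m v \<rho> k \<le> buyer_util m v \<rho> j"
  shows "snd (entry \<rho> j) \<le> revenue m l v \<rho>"
  unfolding revenue_def by (rule Max_ge[OF rev_set_finite]) (use assms in auto)

lemma rev_att:
  "\<exists>j\<le>l. (\<forall>k\<le>l. buyer_util m v \<rho> k \<le> buyer_util m v \<rho> j) \<and> snd (entry \<rho> j) = revenue m l v \<rho>"
proof -
  let ?U = "(\<lambda>k. buyer_util m v \<rho> k) ` {..l}"
  have "Max ?U \<in> ?U" by (rule Max_in) auto
  then obtain j0 where j0: "j0 \<le> l" "buyer_util m v \<rho> j0 = Max ?U"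
    by (metis (no_types, lifting) atMost_iff imageE)
  have "\<forall>k\<le>l. buyer_util m v \<rho> k \<le> buyer_util m v \<rho> j0"
    using j0 by (auto intro!: Max_ge)
  then have ne: "{snd (entry \<rho> j) | j. j \<le> l \<and> (\<forall>k\<le>l. buyer_util m v \<rho> k \<le> buyer_util m v \<rho> j)} \<noteq> {}"
    using j0 by blast
  have "revenue m l v \<rho> \<in> {snd (entry \<rho> j) | j. j \<le> l \<and> (\<forall>k\<le>l. buyer_util m v \<rho> k \<le> buyer_util m v \<rho> j)}"
    unfolding revenue_def by (rule Max_in[OF rev_set_finite ne])
  then show ?thesis by auto
qed

lemma rev_bounds:
  assumes "valid_menu m H l \<rho>" "H \<ge> 0"
  shows "0 \<le> revenue m l v \<rho> \<and> revenue m l v \<rho> \<le> real m * H"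
proof -
  obtain j where j: "j \<le> l" "snd (entry \<rho> j) = revenue m l v \<rho>" using rev_att by blast
  show ?thesis
  proof (cases "j = 0")
    case True then show ?thesis using j assms by (simp add: entry_def)
  next
    case False
    then have "j \<in> {1..l}" using j by auto
    then have "0 \<le> snd (\<rho> j) \<and> snd (\<rho> j) \<le> real m * H" using assms(1) unfolding valid_menu_def by blast
    then show ?thesis using j False by (simp add: entry_def)
  qed
qed

lemma rev_le_sum:
  assumes "valid_menu m H l \<rho>" "\<forall>i<m. 0 \<le> v i"
  shows "revenue m l v \<rho> \<le> (\<Sum>i<m. v i)"
proof -
  obtain j where j: "j \<le> l" "\<forall>k\<le>l. buyer_util m v \<rho> k \<le> buyer_util m v \<rho> j"
      "snd (entry \<rho> j) = revenue m l v \<rho>" using rev_att by blast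
  have s0: "0 \<le> (\<Sum>i<m. v i)" using assms by (auto intro: sum_nonneg)
  show ?thesis
  proof (cases "j = 0")
    case True then show ?thesis using j s0 by (simp add: entry_def)
  next
    case False
    have "buyer_util m v \<rho> 0 \<le> buyer_util m v \<rho> j" using j by auto
    then have "snd (\<rho> j) \<le> (\<Sum>i<m. v i * fst (\<rho> j) i)"
      using False by (simp add: buyer_util_def entry_def)
    also have "\<dots> \<le> (\<Sum>i<m. v i)"
      using assms j False unfolding valid_menu_def
      by (intro sum_mono) (auto intro: mult_left_le)
    finally show ?thesis using j False by (simp add: entry_def)
  qed
qed

definition full_menu :: "nat \<Rightarrow> (nat \<Rightarrow> real) \<Rightarrow> menu" where
  "full_menu m v = (\<lambda>j. ((\<lambda>i. 1), (\<Sum>i<m. v i)))"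

lemma full_menu_rev:
  assumes "l \<ge> 1"
  shows "(\<Sum>i<m. v i) \<le> revenue m l v (full_menu m v)"
proof -
  have "\<forall>k\<le>l. buyer_util m v (full_menu m v) k \<le> buyer_util m v (full_menu m v) 1"
    by (auto simp: buyer_util_def entry_def full_menu_def)
  from rev_ge[OF assms this] show ?thesis by (simp add: entry_def full_menu_def)
qed

lemma full_menu_valid:
  assumes "\<forall>i<m. 0 \<le> v i \<and> v i \<le> H"
  shows "valid_menu m H l (full_menu m v)"
proof -
  have "(\<Sum>i<m. v i) \<le> (\<Sum>i<m. H)" using assms by (intro sum_mono) auto
  moreover have "0 \<le> (\<Sum>i<m. v i)" using assms by (intro sum_nonneg) auto
  ultimately show ?thesis by (auto simp: valid_menu_def full_menu_def)
qed




interpretation fvs: vector_space "(\<lambda>(r::real) (f::nat\<times>nat\<Rightarrow>real) x. r * f x)"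
  by unfold_locales (auto simp: fun_eq_iff algebra_simps)

lemma fun_sum_apply: "(\<Sum>c\<in>A. g c) x = (\<Sum>c\<in>A. (g c x :: real))"
  by (induct A rule: infinite_finite_induct) auto

lemma card_small_subsets:
  assumes "finite U"
  shows "card {J. J \<subseteq> U \<and> card J \<le> d} \<le> (card U + 1) ^ d"
proof -
  define A where "A = insert None (Some ` U)"
  define L where "L = {xs. set xs \<subseteq> A \<and> length xs = d}"
  have cA: "card A = card U + 1" using assms by (simp add: A_def card_image inj_on_def)
  have finA: "finite A" using assms by (simp add: A_def)
  have "{J. J \<subseteq> U \<and> card J \<le> d} \<subseteq> (\<lambda>xs. Some -` set xs) ` L"
  proof
    fix J assume "J \<in> {J. J \<subseteq> U \<and> card J \<le> d}"
    then have J: "J \<subseteq> U" "card J \<le> d" by auto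
    have "finite J" using J assms finite_subset by blast
    then obtain ys where ys: "set ys = J" "distinct ys" using finite_distinct_list by blast
    have len: "length ys = card J" using ys distinct_card by fastforce
    define xs where "xs = map Some ys @ replicate (d - card J) None"
    have "xs \<in> L" using J ys len by (auto simp: L_def A_def xs_def)
    moreover have "Some -` set xs = J" using ys by (auto simp: xs_def)
    ultimately show "J \<in> (\<lambda>xs. Some -` set xs) ` L" by blast
  qed
  then have "card {J. J \<subseteq> U \<and> card J \<le> d} \<le> card ((\<lambda>xs. Some -` set xs) ` L)"
    by (rule card_mono[rotated]) (simp add: L_def finite_lists_length_eq finA)
  also have "\<dots> \<le> card L" by (rule card_image_le) (simp add: L_def finite_lists_length_eq finA)
  also have "card L = card A ^ d" by (simp add: L_def card_lists_length_eq finA)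
  finally show ?thesis by (simp add: cA)
qed

datatype row = Lo "nat\<times>nat" | Up "nat\<times>nat" | ICr "nat \<Rightarrow> real" nat nat

locale mset =
  fixes m :: nat and H :: real and l :: nat and Vs :: "(nat \<Rightarrow> real) set"
  assumes m1: "m \<ge> 1" and Hpos: "H > 0" and l1: "l \<ge> 1" and finV: "finite Vs"
    and vb: "\<forall>v\<in>Vs. \<forall>i<m. 0 \<le> v i \<and> v i \<le> H"
begin

definition D :: "(nat \<times> nat) set" where "D = {1..l} \<times> {..m}"
definition Dsupp :: "(nat\<times>nat \<Rightarrow> real) \<Rightarrow> bool" where
  "Dsupp y \<longleftrightarrow> (\<forall>c. c \<notin> D \<longrightarrow> y c = 0)"
definition dot :: "(nat\<times>nat \<Rightarrow> real) \<Rightarrow> (nat\<times>nat \<Rightarrow> real) \<Rightarrow> real" where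
  "dot a y = (\<Sum>c\<in>D. a c * y c)"
definition ub :: "nat\<times>nat \<Rightarrow> real" where "ub c = (if snd c < m then 1 else real m * H)"
definition coef :: "(nat \<Rightarrow> real) \<Rightarrow> nat \<Rightarrow> nat\<times>nat \<Rightarrow> real" where
  "coef v j c = (if fst c = j \<and> j \<ge> 1 then (if snd c < m then v (snd c) else if snd c = m then -1 else 0) else 0)"
fun raw :: "row \<Rightarrow> nat\<times>nat \<Rightarrow> real" where
  "raw (Lo c0) = (\<lambda>c. if c = c0 then -1 else 0)"
| "raw (Up c0) = (\<lambda>c. if c = c0 then 1 else 0)"
| "raw (ICr v j k) = (\<lambda>c. coef v k c - coef v j c)"
definition nrm :: "row \<Rightarrow> nat\<times>nat \<Rightarrow> real" where "nrm r = (\<lambda>c. if c \<in> D then raw r c else 0)"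
fun rhs :: "row \<Rightarrow> real" where
  "rhs (Lo c) = 0" | "rhs (Up c) = ub c" | "rhs (ICr v j k) = 0"
definition feas where "feas R y \<longleftrightarrow> Dsupp y \<and> (\<forall>r\<in>R. dot (nrm r) y \<le> rhs r)"
definition tight where "tight R y = {r\<in>R. dot (nrm r) y = rhs r}"
definition trivk where
  "trivk J \<longleftrightarrow> (\<forall>w. Dsupp w \<longrightarrow> (\<forall>r\<in>J. dot (nrm r) w = 0) \<longrightarrow> w = (\<lambda>_. 0))"
definition boxR where "boxR = Lo ` D \<union> Up ` D"
definition delta :: "nat\<times>nat \<Rightarrow> nat\<times>nat \<Rightarrow> real" where
  "delta c0 = (\<lambda>c. if c = c0 then 1 else 0)"

lemma finD: "finite D" by (simp add: D_def)

lemma cardD: "card D = l * (m + 1)" by (simp add: D_def card_cartesian_product)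

lemma dot_add: "dot a (\<lambda>c. y c + t * w c) = dot a y + t * dot a w"
  by (simp add: dot_def algebra_simps sum.distrib sum_distrib_left)

lemma dot_scale: "dot a (\<lambda>c. s * w c) = s * dot a w"
  by (simp add: dot_def algebra_simps sum_distrib_left)

lemma dot_nrm: "dot (nrm r) y = dot (raw r) y"
  by (simp add: dot_def nrm_def)

lemma dot_Lo: "c \<in> D \<Longrightarrow> dot (nrm (Lo c)) y = - y c"
  unfolding dot_def nrm_def
  by (subst sum.cong[OF refl, of _ _ "\<lambda>ca. if ca = c then _ else 0"]) (auto simp: finD)

lemma dot_Up: "c \<in> D \<Longrightarrow> dot (nrm (Up c)) y = y c"
  unfolding dot_def nrm_def
  by (subst sum.cong[OF refl, of _ _ "\<lambda>ca. if ca = c then _ else 0"]) (auto simp: finD)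

lemma dot_IC: "dot (nrm (ICr v j k)) y = dot (coef v k) y - dot (coef v j) y"
  unfolding dot_nrm by (simp add: dot_def left_diff_distrib sum_subtractf)

lemma push:
  assumes R: "finite R" "boxR \<subseteq> R"
    and f: "\<And>y w s. f (\<lambda>c. y c + s * w c) = f y + s * f w"
  shows "feas R y \<Longrightarrow> \<exists>y'. feas R y' \<and> f y \<le> f y' \<and> trivk (tight R y')"
proof (induct "card (R - tight R y)" arbitrary: y rule: less_induct)
  case less
  show ?case
  proof (cases "trivk (tight R y)")
    case True then show ?thesis using less.prems by blast
  next
    case False
    then obtain w where w: "Dsupp w" "\<forall>r\<in>tight R y. dot (nrm r) w = 0" "w \<noteq> (\<lambda>_. 0)"
      unfolding trivk_def by blast
    have f0: "f (\<lambda>c. 0) = 0" using f[of "\<lambda>c. 0" 1 "\<lambda>c. 0"] by simp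
    have fs: "f (\<lambda>c. s * w c) = s * f w" for s using f[of "\<lambda>c. 0" s w] f0 by simp
    define s where "s = (if f w \<ge> 0 then 1 else (-1::real))"
    define w2 where "w2 = (\<lambda>c. s * w c)"
    have s0: "s \<noteq> 0" by (simp add: s_def)
    have fw2: "f w2 \<ge> 0" unfolding w2_def fs s_def by auto
    have w2D: "Dsupp w2" using w(1) by (simp add: Dsupp_def w2_def)
    have w2k: "\<forall>r\<in>tight R y. dot (nrm r) w2 = 0" using w(2) by (simp add: w2_def dot_scale)
    have "w2 \<noteq> (\<lambda>_. 0)" using w(3) s0 by (auto simp: w2_def fun_eq_iff)
    then obtain c where c: "w2 c \<noteq> 0" by (auto simp: fun_eq_iff)
    then have cD: "c \<in> D" using w2D unfolding Dsupp_def by blast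
    define P where "P = {r\<in>R. dot (nrm r) w2 > 0}"
    have "Up c \<in> P \<or> Lo c \<in> P" using c cD R(2) by (auto simp: P_def boxR_def dot_Up dot_Lo)
    then have Pne: "P \<noteq> {}" by auto
    have Pfin: "finite P" using R(1) by (simp add: P_def)
    define rat where "rat r = (rhs r - dot (nrm r) y) / dot (nrm r) w2" for r
    define t where "t = Min (rat ` P)"
    have "t \<in> rat ` P" unfolding t_def using Pne Pfin by (intro Min_in) auto
    then obtain r0 where r0: "r0 \<in> P" "t = rat r0" by auto
    have tle: "t \<le> rat r" if "r \<in> P" for r unfolding t_def using Pfin that by (intro Min_le) auto
    have t0: "t \<ge> 0" using r0 less.prems unfolding rat_def P_def feas_def
      by (auto intro!: divide_nonneg_pos)
    define y' where "y' = (\<lambda>c. y c + t * w2 c)"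
    have dy': "dot a y' = dot a y + t * dot a w2" for a by (simp add: y'_def dot_add)
    have feas': "feas R y'"
      unfolding feas_def
    proof (intro conjI ballI)
      show "Dsupp y'" using less.prems w2D by (auto simp: feas_def Dsupp_def y'_def)
      fix r assume r: "r \<in> R"
      show "dot (nrm r) y' \<le> rhs r"
      proof (cases "r \<in> P")
        case True
        then have pos: "dot (nrm r) w2 > 0" by (simp add: P_def)
        have "t * dot (nrm r) w2 \<le> rat r * dot (nrm r) w2"
          using tle[OF True] pos by (intro mult_right_mono) auto
        also have "\<dots> = rhs r - dot (nrm r) y" using pos by (simp add: rat_def)
        finally show ?thesis by (simp add: dy')
      next
        case False
        then have "dot (nrm r) w2 \<le> 0" using r by (auto simp: P_def)
        then have "t * dot (nrm r) w2 \<le> 0" using t0 by (simp add: mult_nonneg_nonpos)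
        then show ?thesis using less.prems r by (auto simp: feas_def dy')
      qed
    qed
    have sub: "tight R y \<subseteq> tight R y'" using w2k by (auto simp: tight_def dy')
    have r0pos: "dot (nrm r0) w2 > 0" using r0 by (simp add: P_def)
    have r0t: "r0 \<in> tight R y'" using r0 r0pos by (auto simp: tight_def dy' P_def rat_def)
    have r0n: "r0 \<notin> tight R y" using r0 w2k by (auto simp: P_def)
    have lt: "card (R - tight R y') < card (R - tight R y)"
      by (rule psubset_card_mono) (use R(1) sub r0t r0n r0 in \<open>auto simp: P_def tight_def\<close>)
    have fy: "f y \<le> f y'" unfolding y'_def f using t0 fw2 by simp
    from less.hyps[OF lt feas'] fy show ?thesis by force
  qed
qed

lemma nrm_span: "nrm r \<in> fvs.span (delta ` D)"
proof -
  have "(\<Sum>c\<in>D. (\<lambda>x. nrm r c * delta c x)) \<in> fvs.span (delta ` D)"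
    by (intro fvs.span_sum fvs.span_scale fvs.span_base) auto
  moreover have "(\<Sum>c\<in>D. (\<lambda>x. nrm r c * delta c x)) = nrm r"
  proof
    fix x
    show "(\<Sum>c\<in>D. (\<lambda>x. nrm r c * delta c x)) x = nrm r x"
      unfolding fun_sum_apply using finD
      by (simp add: delta_def if_distrib sum.delta cong: if_cong) (simp add: nrm_def)
  qed
  ultimately show ?thesis by simp
qed

lemma rank:
  assumes "finite J" "trivk J"
  shows "\<exists>J'\<subseteq>J. card J' \<le> card D \<and> trivk J'"
proof -
  define P where "P J' \<longleftrightarrow> J' \<subseteq> J \<and> trivk J'" for J'
  have "P J" using assms by (simp add: P_def)
  then obtain J0 where J0: "P J0" and min: "\<And>J'. P J' \<Longrightarrow> card J0 \<le> card J'"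
    using ex_has_least_nat[of P J card] by blast
  have fin0: "finite J0" using J0 assms(1) by (auto simp: P_def intro: finite_subset)
  show ?thesis
  proof (rule ccontr)
    assume "\<not> ?thesis"
    then have big: "card J0 > card D" using J0 by (auto simp: P_def not_le)
    have remove: "False" if r0: "r0 \<in> J0"
      and sp: "\<forall>w. Dsupp w \<longrightarrow> (\<forall>r\<in>J0 - {r0}. dot (nrm r) w = 0) \<longrightarrow> dot (nrm r0) w = 0" for r0
    proof -
      have "trivk (J0 - {r0})"
        unfolding trivk_def
      proof (intro allI impI)
        fix w assume w: "Dsupp w" "\<forall>r\<in>J0 - {r0}. dot (nrm r) w = 0"
        then have "\<forall>r\<in>J0. dot (nrm r) w = 0" using sp by auto
        then show "w = (\<lambda>_. 0)" using J0 w(1) by (auto simp: P_def trivk_def)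
      qed
      then have "P (J0 - {r0})" using J0 by (auto simp: P_def)
      then have "card J0 \<le> card (J0 - {r0})" by (rule min)
      then show False using fin0 r0 big by (simp add: card_Diff_singleton)
    qed
    show False
    proof (cases "inj_on nrm J0")
      case False
      then obtain r1 r2 where r12: "r1 \<in> J0" "r2 \<in> J0" "r1 \<noteq> r2" "nrm r1 = nrm r2"
        unfolding inj_on_def by blast
      show False
      proof (rule remove[of r2, OF r12(2)], intro allI impI)
        fix w assume "\<forall>r\<in>J0 - {r2}. dot (nrm r) w = 0"
        moreover have "r1 \<in> J0 - {r2}" using r12 by auto
        ultimately have "dot (nrm r1) w = 0" by blast
        then show "dot (nrm r2) w = 0" using r12 by simp
      qed
    next
      case True
      have A: "nrm ` J0 \<subseteq> fvs.span (delta ` D)" using nrm_span by auto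
      have "\<not> fvs.independent (nrm ` J0)"
      proof
        assume "fvs.independent (nrm ` J0)"
        from fvs.independent_span_bound[OF _ this A] finD
        have "card (nrm ` J0) \<le> card (delta ` D)" by auto
        also have "\<dots> \<le> card D" by (rule card_image_le) (simp add: finD)
        finally show False using big card_image[OF True] by simp
      qed
      then obtain a where a: "a \<in> nrm ` J0" "a \<in> fvs.span (nrm ` J0 - {a})"
        unfolding fvs.dependent_def by blast
      then obtain r0 where r0: "r0 \<in> J0" "a = nrm r0" by auto
      have eq: "nrm ` J0 - {a} = nrm ` (J0 - {r0})" using True r0 by (auto simp: inj_on_def)
      show False
      proof (rule remove[OF r0(1)], intro allI impI)
        fix w assume "Dsupp w" "\<forall>r\<in>J0 - {r0}. dot (nrm r) w = 0"
        then have "nrm ` (J0 - {r0}) \<subseteq> {z. dot z w = 0}" by auto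
        moreover have "fvs.subspace {z. dot z w = 0}"
        proof -
          have "dot (\<lambda>x. c * z x) w = c * dot z w" for c z
            by (simp add: dot_def sum_distrib_left mult.assoc)
          moreover have "dot (z1 + z2) w = dot z1 w + dot z2 w" for z1 z2
            by (simp add: dot_def sum.distrib distrib_right)
          moreover have "dot 0 w = 0" by (simp add: dot_def)
          ultimately show ?thesis by (auto simp: fvs.subspace_def)
        qed
        ultimately have "fvs.span (nrm ` (J0 - {r0})) \<subseteq> {z. dot z w = 0}" by (rule fvs.span_minimal)
        then show "dot (nrm r0) w = 0" using a eq r0 by auto
      qed
    qed
  qed
qed

end



context mset
begin

definition Iall where "Iall = boxR \<union> (\<lambda>(v,j,k). ICr v j k) ` (Vs \<times> {..l} \<times> {..l})"
definition Yc where
  "Yc = {y. Dsupp y \<and> (\<forall>c\<in>D. 0 \<le> y c \<and> y c \<le> ub c) \<and>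
          (\<exists>J\<subseteq>Iall. card J \<le> card D \<and> trivk J \<and> (\<forall>r\<in>J. dot (nrm r) y = rhs r))}"
definition menu_of :: "(nat\<times>nat \<Rightarrow> real) \<Rightarrow> menu" where
  "menu_of y = (\<lambda>j. if j \<in> {1..l} then ((\<lambda>i. if i < m then y (j,i) else 0), y (j,m)) else ((\<lambda>_. 0), 0))"
definition Ecand where "Ecand = menu_of ` Yc"
definition enc :: "menu \<Rightarrow> nat\<times>nat \<Rightarrow> real" where
  "enc \<rho> = (\<lambda>c. if c \<in> D then (if snd c < m then fst (\<rho> (fst c)) (snd c) else snd (\<rho> (fst c))) else 0)"

lemma finIall: "finite Iall"
  unfolding Iall_def boxR_def using finD finV by auto

lemma cardIall: "card Iall \<le> 2 * card D + card Vs * (l+1) * (l+1)"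
proof -
  have "card Iall \<le> card boxR + card ((\<lambda>(v,j,k). ICr v j k) ` (Vs \<times> {..l} \<times> {..l}))"
    unfolding Iall_def by (rule card_Un_le)
  also have "card boxR \<le> card (Lo ` D) + card (Up ` D)" unfolding boxR_def by (rule card_Un_le)
  also have "card (Lo ` D) \<le> card D" by (rule card_image_le[OF finD])
  also have "card (Up ` D) \<le> card D" by (rule card_image_le[OF finD])
  also have "card ((\<lambda>(v,j,k). ICr v j k) ` (Vs \<times> {..l} \<times> {..l})) \<le> card (Vs \<times> {..l} \<times> {..l})"
    by (rule card_image_le) (simp add: finV)
  also have "card (Vs \<times> {..l} \<times> {..l}) = card Vs * (l+1) * (l+1)"
    by (simp add: card_cartesian_product algebra_simps)
  finally show ?thesis by simp
qed

lemma Yc_card: "finite Yc \<and> card Yc \<le> card {J. J \<subseteq> Iall \<and> card J \<le> card D}"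
proof -
  define g where "g y = (SOME J. J\<subseteq>Iall \<and> card J \<le> card D \<and> trivk J \<and> (\<forall>r\<in>J. dot (nrm r) y = rhs r))" for y
  have g: "g y \<subseteq> Iall \<and> card (g y) \<le> card D \<and> trivk (g y) \<and> (\<forall>r\<in>g y. dot (nrm r) y = rhs r)"
    if "y \<in> Yc" for y
    unfolding g_def by (rule someI_ex) (use that in \<open>auto simp: Yc_def\<close>)
  have inj: "inj_on g Yc"
  proof (rule inj_onI)
    fix y1 y2 assume y: "y1 \<in> Yc" "y2 \<in> Yc" "g y1 = g y2"
    define w where "w = (\<lambda>c. y1 c + (-1) * y2 c)"
    have dw: "dot (nrm r) w = dot (nrm r) y1 + (-1) * dot (nrm r) y2" for r
      unfolding w_def by (rule dot_add)
    have "Dsupp w" using y by (auto simp: Yc_def Dsupp_def w_def)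
    moreover have "\<forall>r\<in>g y1. dot (nrm r) w = 0"
      using g[OF y(1)] g[OF y(2)] y(3) by (auto simp: dw)
    ultimately have "w = (\<lambda>_. 0)" using g[OF y(1)] unfolding trivk_def by blast
    then show "y1 = y2" by (auto simp: w_def fun_eq_iff)
  qed
  have img: "g ` Yc \<subseteq> {J. J \<subseteq> Iall \<and> card J \<le> card D}" using g by auto
  have fin: "finite {J. J \<subseteq> Iall \<and> card J \<le> card D}" using finIall by auto
  show ?thesis using inj_on_finite[OF inj img fin] card_inj_on_le[OF inj img fin] by simp
qed

lemma Ecand_fin: "finite Ecand" unfolding Ecand_def using Yc_card by simp

lemma Ecand_card: "card Ecand \<le> (card Iall + 1) ^ card D"
proof -
  have "card Ecand \<le> card Yc" unfolding Ecand_def using Yc_card by (intro card_image_le) auto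
  also have "\<dots> \<le> card {J. J \<subseteq> Iall \<and> card J \<le> card D}" using Yc_card by simp
  also have "\<dots> \<le> (card Iall + 1) ^ card D" by (rule card_small_subsets[OF finIall])
  finally show ?thesis .
qed

lemma Yc_valid:
  assumes y: "\<forall>c\<in>D. 0 \<le> y c \<and> y c \<le> ub c"
  shows "valid_menu m H l (menu_of y)"
  unfolding valid_menu_def
proof (intro ballI conjI allI impI)
  fix j assume j: "j \<in> {1..l}"
  have jm: "(j, m) \<in> D" using j by (simp add: D_def)
  have ji: "(j, i) \<in> D" if "i < m" for i using j that by (simp add: D_def)
  show "0 \<le> snd (menu_of y j)" "snd (menu_of y j) \<le> real m * H"
    using y jm j by (auto simp: menu_of_def ub_def)
  fix i assume i: "i < m"
  show "0 \<le> fst (menu_of y j) i" "fst (menu_of y j) i \<le> 1"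
    using y ji[OF i] i j by (auto simp: menu_of_def ub_def)
qed

lemma Ecand_valid: "\<rho> \<in> Ecand \<Longrightarrow> valid_menu m H l \<rho>"
  unfolding Ecand_def Yc_def using Yc_valid by blast

lemma dot_split: "dot a y = (\<Sum>j\<in>{1..l}. \<Sum>i\<in>{..m}. a (j,i) * y (j,i))"
  by (simp add: dot_def D_def sum.cartesian_product)

lemma bu_menu_of:
  assumes "j \<le> l"
  shows "buyer_util m v (menu_of y) j = dot (coef v j) y"
proof (cases "j = 0")
  case True then show ?thesis by (simp add: buyer_util_def entry_def dot_def coef_def)
next
  case False
  then have jl: "j \<in> {1..l}" using assms by auto
  have "dot (coef v j) y = (\<Sum>j'\<in>{1..l}. if j' = j then (\<Sum>i\<in>{..m}. coef v j (j,i) * y (j,i)) else 0)"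
    unfolding dot_split by (rule sum.cong) (auto simp: coef_def)
  also have "\<dots> = (\<Sum>i\<in>{..m}. coef v j (j,i) * y (j,i))" using jl by simp
  also have "{..m} = insert m {..<m}" by auto
  also have "(\<Sum>i\<in>insert m {..<m}. coef v j (j,i) * y (j,i)) = (\<Sum>i<m. v i * y (j,i)) - y (j,m)"
    using False by (simp add: coef_def)
  finally show ?thesis using jl False by (simp add: buyer_util_def entry_def menu_of_def)
qed

lemma rev_enc:
  assumes "valid_menu m H l \<rho>"
  shows "revenue m l v (menu_of (enc \<rho>)) = revenue m l v \<rho>"
proof -
  have bu: "buyer_util m v (menu_of (enc \<rho>)) j = buyer_util m v \<rho> j" if "j \<le> l" for j
  proof (cases "j = 0")
    case True then show ?thesis by (simp add: buyer_util_def entry_def menu_of_def)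
  next
    case False
    then have jl: "j \<in> {1..l}" using that by auto
    then show ?thesis
      by (auto simp: buyer_util_def entry_def menu_of_def enc_def D_def intro!: sum.cong)
  qed
  have pr: "snd (entry (menu_of (enc \<rho>)) j) = snd (entry \<rho> j)" if "j \<le> l" for j
    using that by (auto simp: entry_def menu_of_def enc_def D_def)
  have "{snd (entry (menu_of (enc \<rho>)) j) | j. j \<le> l \<and>
          (\<forall>k\<le>l. buyer_util m v (menu_of (enc \<rho>)) k \<le> buyer_util m v (menu_of (enc \<rho>)) j)}
      = {snd (entry \<rho> j) | j. j \<le> l \<and> (\<forall>k\<le>l. buyer_util m v \<rho> k \<le> buyer_util m v \<rho> j)}"
  proof (intro set_eqI iffI)
    fix x assume "x \<in> {snd (entry (menu_of (enc \<rho>)) j) | j. j \<le> l \<and>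
          (\<forall>k\<le>l. buyer_util m v (menu_of (enc \<rho>)) k \<le> buyer_util m v (menu_of (enc \<rho>)) j)}"
    then obtain j where "j \<le> l" "\<forall>k\<le>l. buyer_util m v (menu_of (enc \<rho>)) k \<le> buyer_util m v (menu_of (enc \<rho>)) j"
      "x = snd (entry (menu_of (enc \<rho>)) j)" by blast
    then show "x \<in> {snd (entry \<rho> j) | j. j \<le> l \<and> (\<forall>k\<le>l. buyer_util m v \<rho> k \<le> buyer_util m v \<rho> j)}"
      using bu pr by auto
  next
    fix x assume "x \<in> {snd (entry \<rho> j) | j. j \<le> l \<and> (\<forall>k\<le>l. buyer_util m v \<rho> k \<le> buyer_util m v \<rho> j)}"
    then obtain j where "j \<le> l" "\<forall>k\<le>l. buyer_util m v \<rho> k \<le> buyer_util m v \<rho> j"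
      "x = snd (entry \<rho> j)" by blast
    then show "x \<in> {snd (entry (menu_of (enc \<rho>)) j) | j. j \<le> l \<and>
          (\<forall>k\<le>l. buyer_util m v (menu_of (enc \<rho>)) k \<le> buyer_util m v (menu_of (enc \<rho>)) j)}"
      using bu pr by (intro CollectI exI[of _ j]) auto
  qed
  then show ?thesis unfolding revenue_def by simp
qed


lemma dom:
  assumes val: "valid_menu m H l \<rho>" and b: "\<forall>t<T. b t \<in> Vs"
  shows "\<exists>\<rho>'\<in>Ecand. (\<Sum>t<T. revenue m l (b t) \<rho>) \<le> (\<Sum>t<T. revenue m l (b t) \<rho>')"
proof -
  define y0 where "y0 = enc \<rho>"
  define M0 where "M0 = menu_of y0"
  have rev0: "revenue m l v M0 = revenue m l v \<rho>" for v
    unfolding M0_def y0_def by (rule rev_enc[OF val])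
  define \<sigma> where "\<sigma> v = (SOME j. j \<le> l \<and> (\<forall>k\<le>l. buyer_util m v M0 k \<le> buyer_util m v M0 j)
      \<and> snd (entry M0 j) = revenue m l v M0)" for v
  have sig: "\<sigma> v \<le> l \<and> (\<forall>k\<le>l. buyer_util m v M0 k \<le> buyer_util m v M0 (\<sigma> v))
      \<and> snd (entry M0 (\<sigma> v)) = revenue m l v M0" for v
    unfolding \<sigma>_def by (rule someI_ex) (rule rev_att)
  define R where "R = boxR \<union> (\<lambda>(v,k). ICr v (\<sigma> v) k) ` (Vs \<times> {..l})"
  have Rfin: "finite R" unfolding R_def boxR_def using finD finV by auto
  have Rbox: "boxR \<subseteq> R" unfolding R_def by auto
  have RI: "R \<subseteq> Iall"
  proof
    fix r assume "r \<in> R"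
    then consider "r \<in> boxR" | v k where "v \<in> Vs" "k \<le> l" "r = ICr v (\<sigma> v) k"
      unfolding R_def by auto
    then show "r \<in> Iall"
    proof cases
      case 1 then show ?thesis by (simp add: Iall_def)
    next
      case 2
      then have "(v, \<sigma> v, k) \<in> Vs \<times> {..l} \<times> {..l}" using sig by simp
      then show ?thesis unfolding Iall_def using 2 by (auto intro!: image_eqI[where x="(v, \<sigma> v, k)"])
    qed
  qed
  have ICR: "v \<in> Vs \<Longrightarrow> k \<le> l \<Longrightarrow> ICr v (\<sigma> v) k \<in> R" for v k unfolding R_def by auto
  have boxfeas: "(\<forall>r\<in>boxR. dot (nrm r) y \<le> rhs r) \<longleftrightarrow> (\<forall>c\<in>D. 0 \<le> y c \<and> y c \<le> ub c)" for y
  proof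
    assume h: "\<forall>r\<in>boxR. dot (nrm r) y \<le> rhs r"
    show "\<forall>c\<in>D. 0 \<le> y c \<and> y c \<le> ub c"
    proof
      fix c assume c: "c \<in> D"
      have "dot (nrm (Lo c)) y \<le> rhs (Lo c)" "dot (nrm (Up c)) y \<le> rhs (Up c)"
        using h[rule_format, of "Lo c"] h[rule_format, of "Up c"] c by (auto simp: boxR_def)
      then show "0 \<le> y c \<and> y c \<le> ub c" using c by (simp add: dot_Lo dot_Up)
    qed
  next
    assume "\<forall>c\<in>D. 0 \<le> y c \<and> y c \<le> ub c"
    then show "\<forall>r\<in>boxR. dot (nrm r) y \<le> rhs r" by (auto simp: boxR_def dot_Lo dot_Up)
  qed
  have y0D: "Dsupp y0" by (simp add: y0_def enc_def Dsupp_def)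
  have y0box: "\<forall>c\<in>D. 0 \<le> y0 c \<and> y0 c \<le> ub c"
  proof
    fix c assume c: "c \<in> D"
    obtain j i where ji: "c = (j, i)" by (cases c)
    have j: "j \<in> {1..l}" and im: "i \<le> m" using c ji by (auto simp: D_def)
    have vj: "(\<forall>i<m. 0 \<le> fst (\<rho> j) i \<and> fst (\<rho> j) i \<le> 1) \<and> 0 \<le> snd (\<rho> j) \<and> snd (\<rho> j) \<le> real m * H"
      using val j unfolding valid_menu_def by blast
    show "0 \<le> y0 c \<and> y0 c \<le> ub c"
      using vj c ji by (auto simp: y0_def enc_def ub_def)
  qed
  have feas0: "feas R y0"
    unfolding feas_def
  proof (intro conjI ballI)
    show "Dsupp y0" by (rule y0D)
    fix r assume "r \<in> R"
    then consider "r \<in> boxR" | v k where "v \<in> Vs" "k \<le> l" "r = ICr v (\<sigma> v) k"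
      unfolding R_def by auto
    then show "dot (nrm r) y0 \<le> rhs r"
    proof cases
      case 1 then show ?thesis using boxfeas[of y0] y0box by auto
    next
      case 2
      have e1: "dot (coef v k) y0 = buyer_util m v M0 k" using bu_menu_of 2 M0_def by simp
      have e2: "dot (coef v (\<sigma> v)) y0 = buyer_util m v M0 (\<sigma> v)" using bu_menu_of sig M0_def by simp
      show ?thesis using sig[of v] 2 by (simp add: dot_IC e1 e2)
    qed
  qed
  define f where "f y = (\<Sum>t<T. snd (entry (menu_of y) (\<sigma> (b t))))" for y
  have pr_lin: "snd (entry (menu_of (\<lambda>c. y c + s * w c)) j)
      = snd (entry (menu_of y) j) + s * snd (entry (menu_of w) j)" for y s w j
    by (simp add: entry_def menu_of_def)
  have flin: "f (\<lambda>c. y c + s * w c) = f y + s * f w" for y w s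
    by (simp add: f_def pr_lin sum.distrib sum_distrib_left)
  obtain y' where y': "feas R y'" "f y0 \<le> f y'" "trivk (tight R y')"
    using push[where f=f and y=y0, OF Rfin Rbox flin feas0] by blast
  have tfin: "finite (tight R y')" using Rfin by (simp add: tight_def)
  obtain J where J: "J \<subseteq> tight R y'" "card J \<le> card D" "trivk J"
    using rank[OF tfin y'(3)] by blast
  have y'Yc: "y' \<in> Yc"
    unfolding Yc_def
  proof (intro CollectI conjI)
    show "Dsupp y'" using y'(1) by (simp add: feas_def)
    show "\<forall>c\<in>D. 0 \<le> y' c \<and> y' c \<le> ub c" using y'(1) Rbox boxfeas[of y'] by (auto simp: feas_def)
    show "\<exists>J\<subseteq>Iall. card J \<le> card D \<and> trivk J \<and> (\<forall>r\<in>J. dot (nrm r) y' = rhs r)"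
      using J RI by (intro exI[of _ J]) (auto simp: tight_def)
  qed
  have lower: "snd (entry (menu_of y') (\<sigma> v)) \<le> revenue m l v (menu_of y')" if v: "v \<in> Vs" for v
  proof (rule rev_ge)
    show "\<sigma> v \<le> l" using sig by simp
    show "\<forall>k\<le>l. buyer_util m v (menu_of y') k \<le> buyer_util m v (menu_of y') (\<sigma> v)"
    proof (intro allI impI)
      fix k assume k: "k \<le> l"
      have "dot (nrm (ICr v (\<sigma> v) k)) y' \<le> rhs (ICr v (\<sigma> v) k)"
        using y'(1) ICR[OF v k] by (auto simp: feas_def)
      moreover have "dot (coef v k) y' = buyer_util m v (menu_of y') k" using bu_menu_of k by simp
      moreover have "dot (coef v (\<sigma> v)) y' = buyer_util m v (menu_of y') (\<sigma> v)"
        using bu_menu_of sig by simp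
      ultimately show "buyer_util m v (menu_of y') k \<le> buyer_util m v (menu_of y') (\<sigma> v)"
        by (simp add: dot_IC)
    qed
  qed
  have "(\<Sum>t<T. revenue m l (b t) \<rho>) = f y0"
    unfolding f_def M0_def[symmetric]
  proof (rule sum.cong)
    fix t show "revenue m l (b t) \<rho> = snd (entry M0 (\<sigma> (b t)))"
      using sig[of "b t"] rev0[of "b t"] by simp
  qed simp
  also have "\<dots> \<le> f y'" by (rule y'(2))
  also have "\<dots> \<le> (\<Sum>t<T. revenue m l (b t) (menu_of y'))"
    unfolding f_def using lower b by (intro sum_mono) auto
  finally show ?thesis using y'Yc unfolding Ecand_def by blast
qed

end



lemma ln2_half: "1/2 \<le> ln (2::real)"
proof -
  have "exp (1/2::real) \<le> 1 + 1/2 + (1/2)^2" by (rule exp_bound) auto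
  also have "\<dots> \<le> 2" by (simp add: power2_eq_square)
  finally have "exp (1/2::real) \<le> 2" .
  then show ?thesis by (subst ln_ge_iff) auto
qed

lemma nat_bound:
  fixes V l m K :: nat
  assumes "V * l \<ge> 2" "l \<ge> 1" "m \<ge> 1" "V \<ge> 1"
    and K: "K \<le> 2 * (l * (m + 1)) + V * (l+1) * (l+1)"
  shows "K + 1 \<le> (V * l) ^ (m + 6)"
proof -
  define X where "X = V * l"
  have X2: "X \<ge> 2" using assms by (simp add: X_def)
  have lX: "l \<le> X" using assms by (simp add: X_def)
  have a: "2 * (l * (m + 1)) \<le> 4 * m * X"
  proof -
    have "2 * (l * (m + 1)) \<le> 2 * (l * (2 * m))" using assms by simp
    also have "\<dots> = 4 * m * l" by simp
    also have "\<dots> \<le> 4 * m * X" using lX by simp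
    finally show ?thesis .
  qed
  have b: "V * (l+1) * (l+1) \<le> 4 * X * X"
  proof -
    have "V * (l+1) * (l+1) \<le> V * (2*l) * (2*l)" using assms by (intro mult_mono) auto
    also have "\<dots> = 4 * (V * l) * l" by simp
    also have "\<dots> \<le> 4 * X * X" using lX by (simp add: X_def)
    finally show ?thesis .
  qed
  have c: "1 \<le> X * X" using X2 by (simp add: Suc_le_eq)
  have "K + 1 \<le> 4 * m * X + 4 * X * X + X * X" using a b c K by linarith
  also have "\<dots> \<le> 4 * m * (X * X) + 4 * m * (X * X) + m * (X * X)"
    using X2 assms(3) by (intro add_mono) (auto intro: mult_mono)
  also have "\<dots> = 9 * m * X^2" by (simp add: power2_eq_square)
  also have "9 * m * X^2 \<le> X^4 * X^m * X^2"
  proof -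
    have "9 \<le> (2::nat)^4" by simp
    also have "\<dots> \<le> X^4" using X2 by (rule power_mono) simp
    finally have 9: "9 \<le> X^4" .
    have "m < 2^m" by (rule less_exp)
    also have "(2::nat)^m \<le> X^m" using X2 by (rule power_mono) simp
    finally have "m \<le> X^m" by simp
    with 9 show ?thesis by (intro mult_mono) auto
  qed
  also have "\<dots> = X ^ (m + 6)" by (simp add: power_add[symmetric] algebra_simps)
  finally show ?thesis by (simp add: X_def)
qed


lemma single_case:
  fixes m :: nat and H :: real and l T :: nat and v :: "nat \<Rightarrow> real"
  assumes l1: "l \<ge> 1" and vb: "\<forall>i<m. 0 \<le> v i \<and> v i \<le> H"
  shows "\<exists>A :: learner. (\<forall>h. set_pmf (A h) \<subseteq> {\<rho>. valid_menu m H l \<rho>}) \<and>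
      (\<forall>b :: nat \<Rightarrow> nat \<Rightarrow> real. (\<forall>t<T. b t \<in> {v}) \<longrightarrow> menu_regret m H l A b T \<le> 0)"
proof (intro exI[of _ "\<lambda>h. return_pmf (full_menu m v)"] conjI allI impI)
  show "set_pmf (return_pmf (full_menu m v)) \<subseteq> {\<rho>. valid_menu m H l \<rho>}"
    using full_menu_valid[OF vb] by auto
  fix b :: "nat \<Rightarrow> nat \<Rightarrow> real" assume b: "\<forall>t<T. b t \<in> {v}"
  have LR: "learner_reward (\<lambda>h. return_pmf (full_menu m v)) (\<lambda>t. revenue m l (b t)) T
      = (\<Sum>t<T. revenue m l (b t) (full_menu m v))"
    by (simp add: learner_reward_def)
  have ne: "{\<rho>. valid_menu m H l \<rho>} \<noteq> {}" using full_menu_valid[OF vb] by auto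
  have "(SUP \<rho>\<in>{\<rho>. valid_menu m H l \<rho>}. \<Sum>t<T. revenue m l (b t) \<rho>)
      \<le> (\<Sum>t<T. revenue m l (b t) (full_menu m v))"
  proof (rule cSUP_least[OF ne])
    fix \<rho> assume "\<rho> \<in> {\<rho>. valid_menu m H l \<rho>}"
    then have val: "valid_menu m H l \<rho>" by simp
    show "(\<Sum>t<T. revenue m l (b t) \<rho>) \<le> (\<Sum>t<T. revenue m l (b t) (full_menu m v))"
    proof (rule sum_mono)
      fix t assume "t \<in> {..<T}"
      then have bt: "b t = v" using b by auto
      have "revenue m l v \<rho> \<le> (\<Sum>i<m. v i)" by (rule rev_le_sum[OF val]) (use vb in auto)
      also have "\<dots> \<le> revenue m l v (full_menu m v)" by (rule full_menu_rev[OF l1])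
      finally show "revenue m l (b t) \<rho> \<le> revenue m l (b t) (full_menu m v)" by (simp add: bt)
    qed
  qed
  then show "menu_regret m H l (\<lambda>h. return_pmf (full_menu m v)) b T \<le> 0"
    unfolding menu_regret_def LR by simp
qed

theorem mainTheorem19:
  "\<exists>C>0. \<forall>(m::nat) (H::real) (l::nat) (T::nat) (Vs :: (nat \<Rightarrow> real) set).
      m \<ge> 1 \<longrightarrow> H > 0 \<longrightarrow> l \<ge> 1 \<longrightarrow> finite Vs \<longrightarrow> Vs \<noteq> {} \<longrightarrow>
      (\<forall>v\<in>Vs. \<forall>i<m. 0 \<le> v i \<and> v i \<le> H) \<longrightarrow>
      (\<exists>A :: learner.
         (\<forall>h. set_pmf (A h) \<subseteq> {\<rho>. valid_menu m H l \<rho>}) \<and>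
         (\<forall>b :: nat \<Rightarrow> nat \<Rightarrow> real. (\<forall>t<T. b t \<in> Vs) \<longrightarrow>
            menu_regret m H l A b T
              \<le> C * real m ^ 2 * H * real l * sqrt (real T) * ln (real (card Vs) * real l)))"
proof (intro exI[of _ 12] conjI allI impI)
  fix m :: nat and H :: real and l T :: nat and Vs :: "(nat \<Rightarrow> real) set"
  assume m1: "m \<ge> 1" and Hpos: "H > 0" and l1: "l \<ge> 1" and finV: "finite Vs" and Vne: "Vs \<noteq> {}"
    and vb: "\<forall>v\<in>Vs. \<forall>i<m. 0 \<le> v i \<and> v i \<le> H"
  define RHS where "RHS = 12 * real m ^ 2 * H * real l * sqrt (real T) * ln (real (card Vs) * real l)"
  have cV: "card Vs \<ge> 1" using finV Vne by (simp add: Suc_le_eq card_gt_0_iff)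
  have "1 \<le> card Vs * l" using cV l1 by (metis mult_le_mono nat_mult_1)
  then have VL1: "1 \<le> real (card Vs) * real l" by (metis of_nat_1 of_nat_le_iff of_nat_mult)
  have RHS0: "RHS \<ge> 0" unfolding RHS_def using Hpos VL1
    by (intro mult_nonneg_nonneg ln_ge_zero) auto
  show "\<exists>A :: learner.
         (\<forall>h. set_pmf (A h) \<subseteq> {\<rho>. valid_menu m H l \<rho>}) \<and>
         (\<forall>b :: nat \<Rightarrow> nat \<Rightarrow> real. (\<forall>t<T. b t \<in> Vs) \<longrightarrow>
            menu_regret m H l A b T \<le> 12 * real m ^ 2 * H * real l * sqrt (real T) * ln (real (card Vs) * real l))"
  proof (cases "card Vs = 1")
    case True
    then obtain v where Vv: "Vs = {v}" by (auto simp: card_1_singleton_iff)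
    have "\<forall>i<m. 0 \<le> v i \<and> v i \<le> H" using vb Vv by auto
    from single_case[OF l1 this, of T] obtain A where
      A: "\<forall>h. set_pmf (A h) \<subseteq> {\<rho>. valid_menu m H l \<rho>}"
      "\<forall>b :: nat \<Rightarrow> nat \<Rightarrow> real. (\<forall>t<T. b t \<in> {v}) \<longrightarrow> menu_regret m H l A b T \<le> 0" by blast
    show ?thesis
    proof (intro exI[of _ A] conjI allI impI)
      show "set_pmf (A h) \<subseteq> {\<rho>. valid_menu m H l \<rho>}" for h using A(1) by blast
      fix b :: "nat \<Rightarrow> nat \<Rightarrow> real" assume "\<forall>t<T. b t \<in> Vs"
      then have "\<forall>t<T. b t \<in> {v}" using Vv by simp
      then have "menu_regret m H l A b T \<le> 0" using A(2) by blast
      then show "menu_regret m H l A b T \<le> 12 * real m ^ 2 * H * real l * sqrt (real T) * ln (real (card Vs) * real l)" using RHS0 RHS_def by linarith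
    qed
  next
    case False
    then have cV2: "card Vs \<ge> 2" using cV by simp
    interpret mset m H l Vs using m1 Hpos l1 finV vb by unfold_locales auto
    define N where "N = card Ecand"
    define L where "L = ln (real N)"
    define B where "B = real m * H"
    define q where "q = sqrt (L + 1)"
    define r where "r = sqrt (real T)"
    obtain v0 where v0: "v0 \<in> Vs" using Vne by auto
    have full_val: "valid_menu m H l (full_menu m v0)" using full_menu_valid vb v0 by auto
    have Ene: "Ecand \<noteq> {}" using dom[OF full_val, of 0] by auto
    have N1: "N \<ge> 1" using Ene Ecand_fin by (simp add: N_def Suc_le_eq card_gt_0_iff)
    have L0: "L \<ge> 0" using N1 by (simp add: L_def)
    have Bpos: "B > 0" using m1 Hpos by (simp add: B_def)
    have q0: "q > 0" using L0 by (simp add: q_def)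
    have r0: "r \<ge> 0" by (simp add: r_def)
    have qq: "q * q = L + 1" using L0 by (simp add: q_def)
    have rr: "r * r = real T" by (simp add: r_def)
    define \<eta> where "\<eta> = (if L + 1 \<le> real T then q / (r * B) else 1 / B)"
    define A where "A = hedge \<eta> Ecand"
    have Aval: "\<forall>h. set_pmf (A h) \<subseteq> {\<rho>. valid_menu m H l \<rho>}"
      using hedge_set[OF Ecand_fin Ene] Ecand_valid unfolding A_def by blast
    have key: "menu_regret m H l A b T \<le> 2 * B * q * r" if b: "\<forall>t<T. b t \<in> Vs" for b
    proof -
      define u where "u t = revenue m l (b t)" for t
      have ub: "0 \<le> u t x \<and> u t x \<le> B" if "x \<in> Ecand" for t x
        using rev_bounds[OF Ecand_valid[OF that]] Hpos by (simp add: u_def B_def)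
      have LR0: "learner_reward A u T \<ge> 0"
        unfolding learner_reward_def A_def hedge_expect[OF Ecand_fin Ene]
        using ub by (intro sum_nonneg divide_nonneg_nonneg mult_nonneg_nonneg) (auto simp: hw_def)
      have each: "(\<Sum>t<T. u t \<rho>) \<le> learner_reward A u T + 2 * B * q * r" if val: "valid_menu m H l \<rho>" for \<rho>
      proof (cases "L + 1 \<le> real T")
        case True
        then have rq: "q \<le> r" unfolding q_def r_def by (rule real_sqrt_le_mono)
        have rpos: "r > 0" using q0 rq by simp
        have eta: "\<eta> = q / (r * B)" using True by (simp add: \<eta>_def)
        have etapos: "\<eta> > 0" using eta q0 rpos Bpos by simp
        have "\<eta> * B = q / r" using eta Bpos rpos by (simp add: field_simps)
        also have "q / r \<le> 1" using rq rpos by simp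
        finally have etaB: "\<eta> * B \<le> 1" .
        obtain \<rho>' where \<rho>': "\<rho>' \<in> Ecand" "(\<Sum>t<T. u t \<rho>) \<le> (\<Sum>t<T. u t \<rho>')"
          using dom[OF val b] unfolding u_def by blast
        have "(\<Sum>t<T. u t \<rho>') \<le> learner_reward (hedge \<eta> Ecand) u T + ln (card Ecand) / \<eta> + \<eta> * B^2 * T"
          by (rule hedge_regret[OF Ecand_fin Ene _ etapos etaB \<rho>'(1)]) (use ub in auto)
        also have "ln (card Ecand) / \<eta> \<le> B * q * r"
        proof -
          have "ln (card Ecand) / \<eta> = L / \<eta>" by (simp add: L_def N_def)
          also have "\<dots> \<le> (L + 1) / \<eta>" using etapos by (simp add: divide_right_mono)
          also have "\<dots> = (q * q) / (q / (r * B))" by (simp add: eta qq)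
          also have "\<dots> = B * q * r" using q0 rpos Bpos by (simp add: field_simps)
          finally show ?thesis .
        qed
        also have "\<eta> * B^2 * T = (q / (r * B)) * B^2 * (r * r)" by (simp add: eta rr)
        also have "\<dots> = B * q * r" using rpos Bpos by (simp add: field_simps power2_eq_square)
        finally show ?thesis using \<rho>'(2) unfolding A_def by simp
      next
        case False
        then have rq: "r \<le> q" unfolding q_def r_def by (intro real_sqrt_le_mono) simp
        have "(\<Sum>t<T. u t \<rho>) \<le> (\<Sum>t<T. B)"
          using rev_bounds[OF val] Hpos by (intro sum_mono) (simp add: u_def B_def)
        also have "\<dots> = B * (r * r)" by (simp add: rr)
        also have "\<dots> \<le> B * (q * r)" using rq r0 Bpos by (intro mult_left_mono mult_right_mono) auto
        also have "\<dots> \<le> 2 * B * q * r" using Bpos q0 r0 by simp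
        finally show ?thesis using LR0 by simp
      qed
      have ne: "{\<rho>. valid_menu m H l \<rho>} \<noteq> {}" using full_val by auto
      have "(SUP \<rho>\<in>{\<rho>. valid_menu m H l \<rho>}. \<Sum>t<T. u t \<rho>) \<le> learner_reward A u T + 2 * B * q * r"
        by (rule cSUP_least[OF ne]) (use each in auto)
      then show ?thesis unfolding menu_regret_def u_def by simp
    qed
    have qb: "q \<le> 6 * m * l * ln (real (card Vs) * real l)"
    proof -
      define X where "X = card Vs * l"
      have X2: "X \<ge> 2" unfolding X_def using mult_le_mono[OF cV2 l1] by simp
      have lnX: "ln (real X) \<ge> 1/2"
      proof -
        have "(2::real) \<le> real X" using X2 by simp
        then have "ln 2 \<le> ln (real X)" by (subst ln_le_cancel_iff) auto
        then show ?thesis using ln2_half by linarith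
      qed
      have KX: "card Iall + 1 \<le> X ^ (m + 6)"
        unfolding X_def by (rule nat_bound) (use cardIall cardD cV l1 m1 X2 in \<open>auto simp: X_def\<close>)
      have "N \<le> (card Iall + 1) ^ card D" using Ecand_card by (simp add: N_def)
      also have "\<dots> \<le> (X ^ (m + 6)) ^ card D" by (rule power_mono[OF KX]) simp
      also have "\<dots> = X ^ ((m + 6) * (l * (m + 1)))" by (simp add: cardD power_mult)
      finally have NX: "real N \<le> real X ^ ((m + 6) * (l * (m + 1)))"
        by (metis of_nat_le_iff of_nat_power)
      have "L \<le> ln (real X ^ ((m + 6) * (l * (m + 1))))"
        unfolding L_def using N1 NX X2 by (subst ln_le_cancel_iff) auto
      also have "\<dots> = real ((m + 6) * (l * (m + 1))) * ln (real X)" using X2 by (simp add: ln_realpow)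
      finally have LX: "L \<le> real ((m + 6) * (l * (m + 1))) * ln (real X)" .
      have mm: "real ((m + 6) * (l * (m + 1))) \<le> 14 * real m ^ 2 * real l"
      proof -
        have mm1: "m \<le> m * m" using m1 by simp
        have "(m + 6) * (m + 1) = m * m + 7 * m + 6" by (simp add: algebra_simps)
        also have "\<dots> \<le> m * m + 7 * (m * m) + 6 * (m * m)" using mm1 m1 by linarith
        also have "\<dots> = 14 * m^2" by (simp add: power2_eq_square)
        finally have "(m + 6) * (m + 1) \<le> 14 * m^2" .
        then have "(m + 6) * (m + 1) * l \<le> 14 * m^2 * l" by simp
        then have "real ((m + 6) * (m + 1) * l) \<le> real (14 * m^2 * l)" by (simp only: of_nat_le_iff)
        then show ?thesis by (simp add: algebra_simps)
      qed
      have lnX0: "ln (real X) \<ge> 0" using lnX by simp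
      have ml1: "1 \<le> real m ^ 2 * real l"
      proof -
        have "(1::real) \<le> real m ^ 2" using m1 by (simp add: one_le_power)
        moreover have "(1::real) \<le> real l" using l1 by simp
        ultimately show ?thesis using mult_mono[of 1 "real m ^ 2" 1 "real l"] by simp
      qed
      have "L + 1 \<le> 14 * real m ^ 2 * real l * ln (real X) + 2 * ln (real X)"
        using LX mult_right_mono[OF mm lnX0] lnX by linarith
      also have "\<dots> \<le> 16 * real m ^ 2 * real l * ln (real X)"
        using mult_right_mono[OF ml1 lnX0] by linarith
      also have "\<dots> \<le> (6 * real m * real l * ln (real X))^2"
      proof -
        have "16 \<le> 36 * (real l * ln (real X))"
          using mult_mono[of 1 "real l" "1/2" "ln (real X)"] l1 lnX by simp
        then have "16 * (real m ^ 2 * real l * ln (real X)) \<le> 36 * (real l * ln (real X)) * (real m ^ 2 * real l * ln (real X))"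
          using ml1 lnX by (intro mult_right_mono) auto
        then show ?thesis by (simp add: power2_eq_square algebra_simps)
      qed
      finally have "q \<le> sqrt ((6 * real m * real l * ln (real X))^2)" unfolding q_def
        by (rule real_sqrt_le_mono)
      also have "\<dots> = 6 * real m * real l * ln (real X)" using lnX0 by simp
      finally show ?thesis by (simp add: X_def)
    qed
    have final: "2 * B * q * r \<le> RHS"
    proof -
      have "2 * B * q * r \<le> 2 * B * (6 * m * l * ln (real (card Vs) * real l)) * r"
        using qb Bpos r0 by (intro mult_right_mono mult_left_mono) auto
      also have "\<dots> = RHS" by (simp add: RHS_def B_def r_def power2_eq_square)
      finally show ?thesis .
    qed
    show ?thesis
    proof (intro exI[of _ A] conjI allI impI)
      show "set_pmf (A h) \<subseteq> {\<rho>. valid_menu m H l \<rho>}" for h using Aval by blast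
      fix b :: "nat \<Rightarrow> nat \<Rightarrow> real" assume "\<forall>t<T. b t \<in> Vs"
      then have "menu_regret m H l A b T \<le> 2 * B * q * r" by (rule key)
      then show "menu_regret m H l A b T \<le> 12 * real m ^ 2 * H * real l * sqrt (real T) * ln (real (card Vs) * real l)" using final RHS_def by linarith
    qed
  qed
qed simp



end
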